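(* Let $\mathscr H$ be a complex Hilbert space and $\mathbf{T}=(T_1,\dots,T_d)\in\mathbb{B}(\mathscr H)^d$. Then for every $x\in\mathscr H$, $$\sum_{k=1}^{d}\|T_kx\|^2+\sum_{k=1}^{d}|\langle T_k^2x,x\rangle|\le 2\sqrt{d}\,w_e(\mathbf{T})\Big(\sum_{k=1}^{d}\|T_kx\|^2\Big)^{1/2}\|x\|.$$
   Context: $\mathbb{B}(\mathscr H)$ denotes the bounded linear operators on $\mathscr H$. For a $d$-tuple $\mathbf{T}=(T_1,\dots,T_d)\in\mathbb{B}(\mathscr H)^d$, the Euclidean operator radius (joint numerical radius) is $w_e(\mathbf{T})=\sup\{(\sum_{k=1}^d|\langle T_kx,x\rangle|^2)^{1/2}: x\in\mathscr H,\ \|x\|=1\}$. *)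

theory Defs
  imports Complex_Main
begin

text \<open>A complex Hilbert space is modelled as an additive group type 'a together with
  a complex scalar multiplication smul and an inner product ip (linear in the first
  argument, conjugate-linear in the second), complete w.r.t. the induced norm.\<close>

definition hnorm :: "('a \<Rightarrow> 'a \<Rightarrow> complex) \<Rightarrow> 'a \<Rightarrow> real" where
  "hnorm ip x = sqrt (Re (ip x x))"

definition complex_hilbert_space ::
  "(complex \<Rightarrow> 'a::ab_group_add \<Rightarrow> 'a) \<Rightarrow> ('a \<Rightarrow> 'a \<Rightarrow> complex) \<Rightarrow> bool" where
  "complex_hilbert_space smul ip \<longleftrightarrow>
     (\<forall>a x y. smul a (x + y) = smul a x + smul a y) \<and>
     (\<forall>a b x. smul (a + b) x = smul a x + smul b x) \<and>
     (\<forall>a b x. smul (a * b) x = smul a (smul b x)) \<and>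
     (\<forall>x. smul 1 x = x) \<and>
     (\<forall>x y z. ip (x + y) z = ip x z + ip y z) \<and>
     (\<forall>a x y. ip (smul a x) y = a * ip x y) \<and>
     (\<forall>x y. ip y x = cnj (ip x y)) \<and>
     (\<forall>x. Im (ip x x) = 0 \<and> 0 \<le> Re (ip x x)) \<and>
     (\<forall>x. ip x x = 0 \<longrightarrow> x = 0) \<and>
     (\<forall>X::nat \<Rightarrow> 'a.
        (\<forall>e>0. \<exists>N. \<forall>m\<ge>N. \<forall>n\<ge>N. hnorm ip (X m - X n) < e) \<longrightarrow>
        (\<exists>L. (\<lambda>n. hnorm ip (X n - L)) \<longlonglongrightarrow> 0))"

definition bounded_operator ::
  "(complex \<Rightarrow> 'a::ab_group_add \<Rightarrow> 'a) \<Rightarrow> ('a \<Rightarrow> 'a \<Rightarrow> complex) \<Rightarrow> ('a \<Rightarrow> 'a) \<Rightarrow> bool" where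
  "bounded_operator smul ip T \<longleftrightarrow>
     (\<forall>x y. T (x + y) = T x + T y) \<and>
     (\<forall>a x. T (smul a x) = smul a (T x)) \<and>
     (\<exists>C. \<forall>x. hnorm ip (T x) \<le> C * hnorm ip x)"

definition euclid_op_radius ::
  "('a \<Rightarrow> 'a \<Rightarrow> complex) \<Rightarrow> nat \<Rightarrow> (nat \<Rightarrow> 'a \<Rightarrow> 'a) \<Rightarrow> real" where
  "euclid_op_radius ip d T =
     Sup {sqrt (\<Sum>k=1..d. (cmod (ip (T k x) x))^2) | x. hnorm ip x = 1}"

end

theory Submission
  imports Defs
begin

locale hs =
  fixes smul :: "complex \<Rightarrow> 'a::ab_group_add \<Rightarrow> 'a"
    and ip :: "'a \<Rightarrow> 'a \<Rightarrow> complex"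
  assumes H: "complex_hilbert_space smul ip"
begin

lemma ip_add_left: "ip (x + y) z = ip x z + ip y z"
  using H unfolding complex_hilbert_space_def by blast
lemma ip_smul_left: "ip (smul a x) y = a * ip x y"
  using H unfolding complex_hilbert_space_def by blast
lemma ip_sym: "ip y x = cnj (ip x y)"
  using H unfolding complex_hilbert_space_def by blast
lemma ip_self: "Im (ip x x) = 0" "0 \<le> Re (ip x x)"
  using H unfolding complex_hilbert_space_def by blast+
lemma ip_zero_imp: "ip x x = 0 \<Longrightarrow> x = 0"
  using H unfolding complex_hilbert_space_def by blast

lemma ip_add_right: "ip x (y + z) = ip x y + ip x z"
  by (metis ip_sym ip_add_left complex_cnj_add)
lemma ip_smul_right: "ip x (smul a y) = cnj a * ip x y"
  by (metis ip_sym ip_smul_left complex_cnj_mult)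
lemma ip_zero_left: "ip 0 z = 0"
  using ip_add_left[of 0 0 z] by simp
lemma ip_zero_right: "ip z 0 = 0"
  using ip_add_right[of z 0 0] by simp

lemma expand:
  "ip (a1 + smul s a2) (b1 + smul s b2)
   = ip a1 b1 + cnj s * ip a1 b2 + s * ip a2 b1 + s * cnj s * ip a2 b2"
  by (simp add: ip_add_left ip_add_right ip_smul_left ip_smul_right algebra_simps)

lemma hnorm_sq: "(hnorm ip u)^2 = Re (ip u u)"
  unfolding hnorm_def using ip_self(2)[of u] by simp
lemma hnorm_nonneg: "0 \<le> hnorm ip u"
  unfolding hnorm_def using ip_self(2)[of u] by simp
lemma ip_self_eq: "ip u u = complex_of_real ((hnorm ip u)^2)"
  using hnorm_sq[of u] ip_self(1)[of u] by (simp add: complex_eq_iff)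
lemma hnorm_zero: "hnorm ip u = 0 \<Longrightarrow> u = 0"
  using ip_self_eq[of u] ip_zero_imp by simp
lemma hnorm_0: "hnorm ip 0 = 0"
  unfolding hnorm_def by (simp add: ip_zero_left)

lemma cauchy_schwarz: "cmod (ip y z) \<le> hnorm ip y * hnorm ip z"
proof (cases "z = 0")
  case True then show ?thesis by (simp add: ip_zero_right hnorm_0)
next
  case False
  define p where "p = (hnorm ip z)^2"
  have pp: "p > 0" using False hnorm_zero hnorm_nonneg unfolding p_def
    by (metis less_eq_real_def zero_less_power)
  define w where "w = ip y z"
  define t where "t = - w / complex_of_real p"
  have e: "ip (y + smul t z) (y + smul t z)
        = ip y y + cnj t * w + t * cnj w + t * cnj t * complex_of_real p"
    using expand[of y t z y z] by (simp add: w_def p_def ip_self_eq[of z] ip_sym[of z y])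
  also have "\<dots> = ip y y - complex_of_real ((cmod w)^2 / p)"
  proof -
    have ww: "w * cnj w = complex_of_real ((cmod w)^2)"
      by (metis complex_norm_square of_real_power)
    have h: "cnj t * w + t * cnj w + t * cnj t * complex_of_real p
        = - (w * cnj w) / complex_of_real p"
      using pp unfolding t_def by (simp add: field_simps)
    have "ip y y + cnj t * w + t * cnj w + t * cnj t * complex_of_real p
       = ip y y + (cnj t * w + t * cnj w + t * cnj t * complex_of_real p)"
      by (simp only: add.assoc)
    also have "\<dots> = ip y y + - (w * cnj w) / complex_of_real p" using h by simp
    finally show ?thesis using ww by simp
  qed
  finally have "0 \<le> Re (ip y y) - (cmod w)^2 / p"
    using ip_self(2)[of "y + smul t z"] by simp
  hence "(cmod w)^2 \<le> (hnorm ip y)^2 * p" using pp hnorm_sq[of y]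
    by (simp add: field_simps)
  hence "(cmod w)^2 \<le> (hnorm ip y * hnorm ip z)^2"
    by (simp add: p_def power_mult_distrib)
  thus ?thesis unfolding w_def
    using hnorm_nonneg[of y] hnorm_nonneg[of z]
    by (meson mult_nonneg_nonneg power2_le_imp_le)
qed


lemma op_add: "bounded_operator smul ip A \<Longrightarrow> A (x + y) = A x + A y"
  unfolding bounded_operator_def by blast
lemma op_smul: "bounded_operator smul ip A \<Longrightarrow> A (smul a x) = smul a (A x)"
  unfolding bounded_operator_def by blast
lemma op_zero: "bounded_operator smul ip A \<Longrightarrow> A 0 = 0"
  using op_add[of A 0 0] by simp

lemma phase: "\<exists>e. cmod e = 1 \<and> e * a = complex_of_real (cmod a) * cnj e"
proof (cases "a = 0")
  case True then show ?thesis by (intro exI[of _ 1]) simp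
next
  case False
  define e where "e = csqrt (complex_of_real (cmod a) / a)"
  have e2: "e^2 = complex_of_real (cmod a) / a" unfolding e_def by simp
  have "cmod (e^2) = 1" using False unfolding e2 by (simp add: norm_divide)
  hence "(cmod e)^2 = 1" by (simp add: norm_power)
  hence ce: "cmod e = 1" using norm_ge_zero[of e]
    by (metis abs_of_nonneg real_sqrt_abs real_sqrt_one)
  have ec: "e * cnj e = 1" using ce
    by (metis complex_norm_square of_real_1 power_one)
  have "e * a = e^2 * a * cnj e" using ec
    by (simp add: power2_eq_square algebra_simps)
  also have "\<dots> = complex_of_real (cmod a) * cnj e" using False by (simp add: e2)
  finally show ?thesis using ce by blast
qed

lemma key:
  assumes A: "bounded_operator smul ip A"
    and W: "\<And>u. cmod (ip (A u) u) \<le> W * (hnorm ip u)^2"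
    and r: "r \<ge> 0"
  shows "r * (cmod (ip (A (A x)) x) + (hnorm ip (A x))^2)
         \<le> W * ((hnorm ip x)^2 + r^2 * (hnorm ip (A x))^2)"
proof -
  define a where "a = ip (A (A x)) x"
  define b where "b = (hnorm ip (A x))^2"
  obtain e where e1: "cmod e = 1" and ea: "e * a = complex_of_real (cmod a) * cnj e"
    using phase by blast
  define c where "c = complex_of_real r * e"
  define u where "u = x + smul c (A x)"
  define v where "v = x + smul (-c) (A x)"
  have bb: "ip (A x) (A x) = complex_of_real b" unfolding b_def by (rule ip_self_eq)
  have Au: "A u = A x + smul c (A (A x))" unfolding u_def using A by (simp add: op_add op_smul)
  have Av: "A v = A x + smul (-c) (A (A x))" unfolding v_def using A by (simp add: op_add op_smul)
  have D: "ip (A u) u - ip (A v) v = 2 * (cnj c * complex_of_real b + c * a)"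
    unfolding Au Av unfolding u_def v_def expand a_def bb by (simp add: algebra_simps)
  have cc: "c * cnj c = complex_of_real (r^2)" unfolding c_def using e1
    by (simp add: complex_norm_square[symmetric] power2_eq_square algebra_simps)
  have N: "ip u u + ip v v = 2 * ip x x + 2 * complex_of_real (r^2) * complex_of_real b"
    unfolding u_def v_def expand bb using cc by (simp add: algebra_simps)
  have N': "(hnorm ip u)^2 + (hnorm ip v)^2 = 2 * (hnorm ip x)^2 + 2 * r^2 * b"
    using arg_cong[OF N, of Re] by (simp add: hnorm_sq)
  have "cnj c * complex_of_real b + c * a = complex_of_real r * cnj e * complex_of_real (b + cmod a)"
    unfolding c_def using ea by (simp add: algebra_simps)
  hence "cmod (cnj c * complex_of_real b + c * a)
       = cmod (complex_of_real r) * cmod (cnj e) * cmod (complex_of_real (b + cmod a))"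
    by (simp only: norm_mult)
  also have "\<dots> = r * (b + cmod a)"
    using e1 r by (simp only: norm_of_real complex_mod_cnj) (simp add: b_def)
  finally have cm: "cmod (cnj c * complex_of_real b + c * a) = r * (b + cmod a)" .
  have "cmod (ip (A u) u - ip (A v) v) = 2 * (r * (b + cmod a))"
    by (simp only: D norm_mult cm) simp
  hence "2 * (r * (b + cmod a)) = cmod (ip (A u) u - ip (A v) v)" by simp
  also have "\<dots> \<le> cmod (ip (A u) u) + cmod (ip (A v) v)" by (rule norm_triangle_ineq4)
  also have "\<dots> \<le> W * (hnorm ip u)^2 + W * (hnorm ip v)^2" using W add_mono by blast
  also have "\<dots> = W * ((hnorm ip u)^2 + (hnorm ip v)^2)" by (simp add: algebra_simps)
  also have "\<dots> = 2 * (W * ((hnorm ip x)^2 + r^2 * b))" unfolding N' by (simp add: algebra_simps)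
  finally show ?thesis unfolding a_def b_def by (simp add: algebra_simps)
qed

lemma radius_bound:
  assumes B: "\<And>k. k \<in> {1..d} \<Longrightarrow> bounded_operator smul ip (T k)"
    and k: "k \<in> {1..d}"
  shows "cmod (ip (T k u) u) \<le> euclid_op_radius ip d T * (hnorm ip u)^2"
proof -
  let ?S = "{sqrt (\<Sum>k=1..d. (cmod (ip (T k x) x))^2) | x. hnorm ip x = 1}"
  have "\<forall>j\<in>{1..d}. \<exists>C. \<forall>x. hnorm ip (T j x) \<le> C * hnorm ip x"
    using B unfolding bounded_operator_def by blast
  then obtain Cf where Cf: "\<And>j x. j \<in> {1..d} \<Longrightarrow> hnorm ip (T j x) \<le> Cf j * hnorm ip x"
    by metis
  have bdd: "bdd_above ?S"
  proof (rule bdd_aboveI[of _ "sqrt (\<Sum>j=1..d. (Cf j)^2)"])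
    fix s assume "s \<in> ?S"
    then obtain z where s: "s = sqrt (\<Sum>k=1..d. (cmod (ip (T k z) z))^2)" and z: "hnorm ip z = 1"
      by blast
    have hj: "(cmod (ip (T j z) z))^2 \<le> (Cf j)^2" if j: "j \<in> {1..d}" for j
    proof -
      have "cmod (ip (T j z) z) \<le> Cf j"
        using cauchy_schwarz[of "T j z" z] Cf[OF j, of z] z by simp
      thus ?thesis by (simp add: power_mono)
    qed
    show "s \<le> sqrt (\<Sum>j=1..d. (Cf j)^2)" unfolding s
      apply (intro real_sqrt_le_mono sum_mono) using hj by blast
  qed
  show ?thesis
  proof (cases "u = 0")
    case True then show ?thesis using B[OF k] by (simp add: op_zero ip_zero_left hnorm_0)
  next
    case False
    define n where "n = hnorm ip u"
    have n: "n > 0" using False hnorm_zero hnorm_nonneg unfolding n_def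
      by (metis less_eq_real_def)
    define z where "z = smul (complex_of_real (1/n)) u"
    have "ip z z = complex_of_real ((1/n)^2 * n^2)"
      unfolding z_def ip_smul_left ip_smul_right
      by (simp add: ip_self_eq[of u] n_def power2_eq_square)
    hence "ip z z = 1" using n by (simp add: field_simps)
    hence z1: "hnorm ip z = 1" unfolding hnorm_def by simp
    have Tz: "ip (T k z) z = complex_of_real ((1/n)^2) * ip (T k u) u"
      unfolding z_def op_smul[OF B[OF k]] ip_smul_left ip_smul_right
      by (simp add: power2_eq_square)
    have "cmod (ip (T k z) z) = sqrt ((cmod (ip (T k z) z))^2)" by simp
    also have "\<dots> \<le> sqrt (\<Sum>k=1..d. (cmod (ip (T k z) z))^2)"
      using k by (intro real_sqrt_le_mono member_le_sum) auto
    also have "\<dots> \<le> euclid_op_radius ip d T"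
      unfolding euclid_op_radius_def using z1 by (intro cSup_upper[OF _ bdd]) blast
    finally have "cmod (ip (T k z) z) \<le> euclid_op_radius ip d T" .
    hence "(1/n)^2 * cmod (ip (T k u) u) \<le> euclid_op_radius ip d T"
      unfolding Tz using n by (simp add: norm_mult norm_power norm_divide)
    thus ?thesis using n unfolding n_def[symmetric]
      by (simp add: field_simps)
  qed
qed
end

theorem theorem2p2:
  fixes smul :: "complex \<Rightarrow> 'a::ab_group_add \<Rightarrow> 'a"
    and ip :: "'a \<Rightarrow> 'a \<Rightarrow> complex"
    and d :: nat
    and T :: "nat \<Rightarrow> 'a \<Rightarrow> 'a"
    and x :: 'a
  assumes "complex_hilbert_space smul ip"
    and "\<And>k. k \<in> {1..d} \<Longrightarrow> bounded_operator smul ip (T k)"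
  shows "(\<Sum>k=1..d. (hnorm ip (T k x))^2) + (\<Sum>k=1..d. cmod (ip (T k (T k x)) x))
         \<le> 2 * sqrt (real d) * euclid_op_radius ip d T
             * sqrt (\<Sum>k=1..d. (hnorm ip (T k x))^2) * hnorm ip x"
proof -
  interpret hs smul ip by unfold_locales (rule assms(1))
  note B = assms(2)
  define W where "W = euclid_op_radius ip d T"
  define b where "b = (\<lambda>k. (hnorm ip (T k x))^2)"
  define a where "a = (\<lambda>k. cmod (ip (T k (T k x)) x))"
  define S where "S = (\<Sum>k=1..d. b k)"
  have b0: "\<And>k. b k \<ge> 0" unfolding b_def by simp
  have S0: "S \<ge> 0" unfolding S_def using b0 by (simp add: sum_nonneg)
  show ?thesis
  proof (cases "S = 0")
    case True
    have "\<forall>k\<in>{1..d}. b k = 0" using True b0 unfolding S_def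
      by (simp add: sum_nonneg_eq_0_iff)
    hence "\<forall>k\<in>{1..d}. T k x = 0" unfolding b_def using hnorm_zero by simp
    hence "\<forall>k\<in>{1..d}. a k = 0"
    proof (intro ballI)
      fix k assume "\<forall>k\<in>{1..d}. T k x = 0" and k: "k \<in> {1..d}"
      hence "T k x = 0" by blast
      thus "a k = 0" unfolding a_def using op_zero[OF B[OF k]] ip_zero_left by simp
    qed
    hence "(\<Sum>k=1..d. a k) = 0" by simp
    thus ?thesis using True unfolding S_def a_def b_def by simp
  next
    case False
    hence Sp: "S > 0" using S0 by simp
    have d1: "d \<ge> 1"
    proof (rule ccontr)
      assume "\<not> d \<ge> 1" hence "d = 0" by simp
      thus False using False unfolding S_def by simp
    qed
    define n where "n = hnorm ip x"
    have np: "n > 0"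
    proof (rule ccontr)
      assume "\<not> n > 0"
      hence "x = 0" using hnorm_nonneg[of x] hnorm_zero unfolding n_def by force
      hence "\<forall>k\<in>{1..d}. b k = 0" unfolding b_def using B op_zero hnorm_0
        by (metis power_zero_numeral)
      thus False using False unfolding S_def by simp
    qed
    define r where "r = sqrt (real d) * n / sqrt S"
    have rp: "r > 0" unfolding r_def using np Sp d1 by simp
    have kk: "r * (a k + b k) \<le> W * (n^2 + r^2 * b k)" if k: "k \<in> {1..d}" for k
    proof -
      have "r * (a k + b k) \<le> W * ((hnorm ip x)^2 + r^2 * (hnorm ip (T k x))^2)"
        unfolding a_def b_def W_def
        by (rule key[OF B[OF k] radius_bound[where T=T and d=d and k=k, OF B k] less_imp_le[OF rp]])
      thus ?thesis unfolding n_def b_def .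
    qed
    have "r * ((\<Sum>k=1..d. a k) + S) = (\<Sum>k=1..d. r * (a k + b k))"
      unfolding S_def by (simp add: sum_distrib_left[symmetric] sum.distrib)
    also have "\<dots> \<le> (\<Sum>k=1..d. W * (n^2 + r^2 * b k))" using kk by (rule sum_mono)
    also have "\<dots> = W * (real d * n^2 + r^2 * S)"
      unfolding S_def by (simp add: sum_distrib_left sum.distrib algebra_simps)
    also have "r^2 * S = real d * n^2"
      unfolding r_def using Sp by (simp add: power_mult_distrib power_divide)
    finally have I: "r * ((\<Sum>k=1..d. a k) + S) \<le> W * (2 * real d * n^2)" by simp
    have E: "r * (2 * sqrt (real d) * W * sqrt S * n) = W * (2 * real d * n^2)"
      unfolding r_def using Sp
      by (simp add: power2_eq_square algebra_simps)
    have "r * ((\<Sum>k=1..d. a k) + S) \<le> r * (2 * sqrt (real d) * W * sqrt S * n)"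
      by (subst E) (rule I)
    hence "(\<Sum>k=1..d. a k) + S \<le> 2 * sqrt (real d) * W * sqrt S * n"
      using rp by simp
    thus ?thesis unfolding W_def S_def a_def b_def n_def by simp
  qed
qed

end
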